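(* Let $K_x,K_y,K_z>0$. Then $\min_{\vec q\in[-\pi,\pi]^2}\epsilon_{\vec q,1}=0$ if and only if $|K_x-K_y|\le K_z\le K_x+K_y$ (i.e. $K_x,K_y,K_z$ satisfy all three triangle inequalities). When these inequalities hold, $\epsilon_{\vec q,1}$ vanishes at $\vec q=(0,\pm q_y^* )$ with $\cos q_y^*=\dfrac{\cosh2K_z-\cosh2K_x\cosh2K_y}{\sinh2K_x\sinh2K_y}$; otherwise $\epsilon_{\vec q,1}>0$ for all $\vec q$.
   Context: For $\vec q=(q_x,q_y)$, with $P=\begin{pmatrix}0&i&0&0\\-i&0&0&0\\0&0&0&i\\0&0&-i&0\end{pmatrix}$, $Q=\begin{pmatrix}0&ie^{-iq_y}&0&0\\-ie^{iq_y}&0&0&0\\0&0&0&ie^{iq_y}\\0&0&-ie^{-iq_y}&0\end{pmatrix}$, $R=\begin{pmatrix}0&0&0&ie^{-iq_x}\\0&0&-i&0\\0&i&0&0\\-ie^{iq_x}&0&0&0\end{pmatrix}$, let $T_{\vec q}=e^{2K_xP}e^{2K_yQ}e^{2K_zR}$. Its eigenvalues are $e^{\pm\epsilon_{\vec q,1}},e^{\pm\epsilon_{\vec q,2}}$ with $0\le\epsilon_{\vec q,1}\le\epsilon_{\vec q,2}$ real. Equivalently $z_j=\cosh\epsilon_{\vec q,j}$ are the roots of $z^2+Az+B=0$ with $A=-2c_3(c_1c_2+s_1s_2\cos q_y)$, $B=\tfrac18S_1S_2(3+C_3-2s_3^2\cos q_x)\cos q_y+\tfrac12s_1^2s_2^2\cos2q_y+\tfrac14s_3^2(1-C_1C_2)\cos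 q_x+\tfrac18(C_1+C_2+3C_3)+\tfrac14C_1C_2+\tfrac18C_1C_2C_3$, where $c_j=\cosh2K_j$, $s_j=\sinh2K_j$, $C_j=\cosh4K_j$, $S_j=\sinh4K_j$ and indices $1,2,3$ stand for $x,y,z$.
   Formalization: $\epsilon_{\vec q,1}$ is the smaller of |ln|z + sqrt(z*z - 1)|| over the two complex roots z of $z^2+Az+B=0$, in place of the real number with $z_j=\cosh\epsilon_{\vec q,j}$. The paper assumes this as well. *)

theory Defs
  imports "HOL-Analysis.Analysis"
begin

text \<open>Coefficients of the quadratic z^2 + A z + B = 0 whose roots are z_j = cosh eps_{q,j}.
  Indices 1,2,3 stand for x,y,z: c_j = cosh 2K_j, s_j = sinh 2K_j, C_j = cosh 4K_j, S_j = sinh 4K_j.\<close>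

definition coefA :: "real \<Rightarrow> real \<Rightarrow> real \<Rightarrow> real \<Rightarrow> real" where
  "coefA Kx Ky Kz qy =
     - 2 * cosh (2*Kz) * (cosh (2*Kx) * cosh (2*Ky) + sinh (2*Kx) * sinh (2*Ky) * cos qy)"

definition coefB :: "real \<Rightarrow> real \<Rightarrow> real \<Rightarrow> real \<Rightarrow> real \<Rightarrow> real" where
  "coefB Kx Ky Kz qx qy =
     1/8 * sinh (4*Kx) * sinh (4*Ky) * (3 + cosh (4*Kz) - 2 * (sinh (2*Kz))^2 * cos qx) * cos qy
   + 1/2 * (sinh (2*Kx))^2 * (sinh (2*Ky))^2 * cos (2*qy)
   + 1/4 * (sinh (2*Kz))^2 * (1 - cosh (4*Kx) * cosh (4*Ky)) * cos qx
   + 1/8 * (cosh (4*Kx) + cosh (4*Ky) + 3 * cosh (4*Kz))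
   + 1/4 * cosh (4*Kx) * cosh (4*Ky)
   + 1/8 * cosh (4*Kx) * cosh (4*Ky) * cosh (4*Kz)"

definition zroot :: "bool \<Rightarrow> real \<Rightarrow> real \<Rightarrow> real \<Rightarrow> real \<Rightarrow> real \<Rightarrow> complex" where
  "zroot pl Kx Ky Kz qx qy =
     (let A = complex_of_real (coefA Kx Ky Kz qy);
          B = complex_of_real (coefB Kx Ky Kz qx qy)
      in (- A + (if pl then 1 else -1) * csqrt (A^2 - 4 * B)) / 2)"

text \<open>For a root z = cosh eps, the corresponding eigenvalues of T_q are
  lambda = z +- sqrt(z^2-1) = e^{+-eps}; eps := |ln |lambda|| (the same for lambda and 1/lambda).
  For real z \<ge> 1 this is exactly arcosh z.\<close>

definition eps_of :: "complex \<Rightarrow> real" where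
  "eps_of z = \<bar>ln (cmod (z + csqrt (z^2 - 1)))\<bar>"

definition eps1 :: "real \<Rightarrow> real \<Rightarrow> real \<Rightarrow> real \<Rightarrow> real \<Rightarrow> real" where
  "eps1 Kx Ky Kz qx qy =
     min (eps_of (zroot True Kx Ky Kz qx qy)) (eps_of (zroot False Kx Ky Kz qx qy))"

end

theory Submission
  imports Defs
begin

lemma key_alg:
  fixes kx hx ky hy kz hz u v z :: real
  assumes "kx^2 = 1 + hx^2" "ky^2 = 1 + hy^2" "kz^2 = 1 + hz^2"
  shows "z^2 + (- 2 * kz * (kx * ky + hx * hy * u)) * z +
     (1/8 * (2*hx*kx) * (2*hy*ky) * (3 + (1 + 2*hz^2) - 2 * hz^2 * v) * u
   + 1/2 * hx^2 * hy^2 * (2*u^2 - 1)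
   + 1/4 * hz^2 * (1 - (1+2*hx^2) * (1+2*hy^2)) * v
   + 1/8 * ((1+2*hx^2) + (1+2*hy^2) + 3 * (1+2*hz^2))
   + 1/4 * (1+2*hx^2) * (1+2*hy^2)
   + 1/8 * (1+2*hx^2) * (1+2*hy^2) * (1+2*hz^2))
   = (z - kz*(kx * ky + hx * hy * u))^2 - hz^2*(1-(1-v)/2)*((kx * ky + hx * hy * u)^2-1)
     + hz^2*((1-v)/2)*hx^2*hy^2*(1-u^2)"
using assms by algebra


definition XX :: "real \<Rightarrow> real \<Rightarrow> real \<Rightarrow> real" where
  "XX Kx Ky qy = cosh (2*Kx) * cosh (2*Ky) + sinh (2*Kx) * sinh (2*Ky) * cos qy"

lemma cosh4: "cosh (4*K) = 1 + 2 * sinh (2*K)^2" for K :: real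
proof -
  have "cosh (4*K) = cosh (2*(2*K))" by simp
  also have "\<dots> = cosh (2*K)^2 + sinh (2*K)^2" by (rule cosh_double)
  finally show ?thesis by (simp add: cosh_square_eq)
qed

lemma sinh4: "sinh (4*K) = 2 * sinh (2*K) * cosh (2*K)" for K :: real
proof -
  have "sinh (4*K) = sinh (2*(2*K))" by simp
  also have "\<dots> = 2 * sinh (2*K) * cosh (2*K)" by (rule sinh_double)
  finally show ?thesis .
qed

lemma key:
  fixes z :: real
  shows "z^2 + coefA Kx Ky Kz qy * z + coefB Kx Ky Kz qx qy
   = (z - cosh (2*Kz) * XX Kx Ky qy)^2 - sinh (2*Kz)^2*(1-(1-cos qx)/2)*((XX Kx Ky qy)^2-1)
     + sinh (2*Kz)^2*((1-cos qx)/2)* sinh (2*Kx)^2* sinh (2*Ky)^2*(1-(cos qy)^2)"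
  unfolding coefA_def coefB_def XX_def cosh4 sinh4 cos_double_cos
  by (rule key_alg) (simp_all add: cosh_square_eq)

lemma XX_ge:
  assumes "Kx > 0" "Ky > 0"
  shows "XX Kx Ky qy \<ge> cosh (2*Kx - 2*Ky)" "XX Kx Ky qy \<le> cosh (2*Kx + 2*Ky)"
proof -
  have h: "sinh (2*Kx) * sinh (2*Ky) \<ge> 0" using assms by simp
  have "sinh (2*Kx) * sinh (2*Ky) * cos qy \<ge> sinh (2*Kx) * sinh (2*Ky) * (-1)"
    by (rule mult_left_mono) (use h in auto)
  then show "XX Kx Ky qy \<ge> cosh (2*Kx - 2*Ky)" unfolding XX_def cosh_diff by simp
  have "sinh (2*Kx) * sinh (2*Ky) * cos qy \<le> sinh (2*Kx) * sinh (2*Ky) * 1"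
    by (rule mult_left_mono) (use h in auto)
  then show "XX Kx Ky qy \<le> cosh (2*Kx + 2*Ky)" unfolding XX_def cosh_add by simp
qed

lemma lower:
  fixes z :: real
  assumes "Kx > 0" "Ky > 0" "-1 \<le> z" "z \<le> 1"
  shows "z^2 + coefA Kx Ky Kz qy * z + coefB Kx Ky Kz qx qy \<ge> (XX Kx Ky qy - cosh (2*Kz))^2"
proof -
  define X where "X = XX Kx Ky qy"
  define w where "w = (1 - cos qx)/2"
  define k where "k = cosh (2*Kz)"
  define h where "h = sinh (2*Kz)"
  have X1: "X \<ge> 1" using XX_ge(1)[OF assms(1,2), of qy] cosh_real_ge_1[of "2*Kx - 2*Ky"]
    unfolding X_def by linarith
  have k1: "k \<ge> 1" unfolding k_def by (rule cosh_real_ge_1)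
  have hk: "h^2 = k^2 - 1" unfolding h_def k_def by (rule sinh_square_eq)
  have w0: "w \<ge> 0" "w \<le> 1" unfolding w_def using cos_le_one[of qx] cos_ge_minus_one[of qx] by auto
  have X2: "X^2 - 1 \<ge> 0" proof -
    have "1 * 1 \<le> X * X" using X1 by (intro mult_mono) auto
    then show ?thesis by (simp add: power2_eq_square)
  qed
  have u2: "1 - (cos qy)^2 \<ge> 0" by (simp add: cos_squared_eq) 
  have t1: "h^2 * w * (X^2 - 1) \<ge> 0" using w0 X2 by simp
  have t2: "h^2 * w * sinh (2*Kx)^2 * sinh (2*Ky)^2 * (1 - (cos qy)^2) \<ge> 0" using w0 u2 by simp
  have kX: "k * X \<ge> 1" proof -
    have "1 * 1 \<le> k * X" using X1 k1 by (intro mult_mono) auto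
    then show ?thesis by simp
  qed
  have t3: "(z - 1) * (z + 1 - 2*k*X) \<ge> 0" using assms(4) kX by (intro mult_nonpos_nonpos) auto
  have "z^2 + coefA Kx Ky Kz qy * z + coefB Kx Ky Kz qx qy
     = (X - k)^2 + (z - 1) * (z + 1 - 2*k*X) + h^2 * w * (X^2 - 1)
       + h^2 * w * sinh (2*Kx)^2 * sinh (2*Ky)^2 * (1 - (cos qy)^2)"
    unfolding key X_def[symmetric] w_def[symmetric] k_def[symmetric] h_def[symmetric] hk
    by (simp add: algebra_simps power2_eq_square)
  then show ?thesis using t1 t2 t3 unfolding X_def k_def by linarith
qed


lemma zroot_root:
  "(zroot pl Kx Ky Kz qx qy)^2 + complex_of_real (coefA Kx Ky Kz qy) * zroot pl Kx Ky Kz qx qy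
     + complex_of_real (coefB Kx Ky Kz qx qy) = 0"
proof -
  define A where "A = complex_of_real (coefA Kx Ky Kz qy)"
  define B where "B = complex_of_real (coefB Kx Ky Kz qx qy)"
  define d where "d = csqrt (A^2 - 4 * B)"
  have d2: "d^2 = A^2 - 4*B" unfolding d_def by simp
  define e :: complex where "e = (if pl then 1 else -1)"
  have e2: "e^2 = 1" unfolding e_def by simp
  have z: "zroot pl Kx Ky Kz qx qy = (- A + e * d) / 2"
    unfolding zroot_def A_def B_def d_def e_def Let_def by simp
  have "((- A + e * d) / 2)^2 + A * ((- A + e * d) / 2) + B = (e^2 * d^2 - A^2 + 4*B)/4"
    by (simp add: field_simps power2_eq_square)
  also have "\<dots> = 0" using e2 d2 by simp
  finally show ?thesis unfolding z A_def B_def .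
qed

lemma zroot_prod:
  "(1 - zroot True Kx Ky Kz qx qy) * (1 - zroot False Kx Ky Kz qx qy)
    = complex_of_real (1 + coefA Kx Ky Kz qy + coefB Kx Ky Kz qx qy)"
proof -
  define A where "A = complex_of_real (coefA Kx Ky Kz qy)"
  define B where "B = complex_of_real (coefB Kx Ky Kz qx qy)"
  define d where "d = csqrt (A^2 - 4 * B)"
  have d2: "d^2 = A^2 - 4*B" unfolding d_def by simp
  have z1: "zroot True Kx Ky Kz qx qy = (- A + d) / 2"
    unfolding zroot_def A_def B_def d_def Let_def by simp
  have z2: "zroot False Kx Ky Kz qx qy = (- A - d) / 2"
    unfolding zroot_def A_def B_def d_def Let_def by simp
  have "(1 - (- A + d) / 2) * (1 - (- A - d) / 2) = ((2 + A)^2 - d^2) / 4"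
    by (simp add: field_simps power2_eq_square)
  also have "\<dots> = 1 + A + B" using d2 by (simp add: field_simps power2_eq_square)
  finally show ?thesis unfolding z1 z2 A_def B_def by simp
qed

lemma eps_nonneg: "eps_of z \<ge> 0" unfolding eps_of_def by simp

lemma eps_one: "eps_of 1 = 0" unfolding eps_of_def by simp

lemma eps_zero:
  assumes "eps_of z = 0"
  shows "\<exists>t. z = complex_of_real t \<and> -1 \<le> t \<and> t \<le> 1"
proof -
  define s where "s = csqrt (z^2 - 1)"
  define w where "w = z + s"
  have s2: "s^2 = z^2 - 1" unfolding s_def by simp
  have prod: "w * (z - s) = 1" unfolding w_def using s2 by (simp add: algebra_simps power2_eq_square)
  then have w0: "w \<noteq> 0" by auto
  have "ln (cmod w) = 0" using assms unfolding eps_of_def w_def s_def by simp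
  then have n1: "cmod w = 1" using w0 by simp
  have "w * cnj w = 1" using complex_norm_square[of w] n1 by simp
  then have "z - s = cnj w" using prod w0
    by (metis mult.commute mult_cancel_left)
  then have "2 * z = w + cnj w" unfolding w_def by (simp add: algebra_simps)
  also have "\<dots> = complex_of_real (2 * Re w)" by (rule complex_add_cnj)
  finally have "z = complex_of_real (Re w)" by simp
  moreover have "\<bar>Re w\<bar> \<le> 1" using abs_Re_le_cmod[of w] n1 by simp
  ultimately show ?thesis by auto
qed

lemma no_zero_root:
  assumes "Kx > 0" "Ky > 0" "XX Kx Ky qy \<noteq> cosh (2*Kz)"
  shows "eps_of (zroot pl Kx Ky Kz qx qy) > 0"
proof (rule ccontr)
  assume "\<not> eps_of (zroot pl Kx Ky Kz qx qy) > 0"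
  then have "eps_of (zroot pl Kx Ky Kz qx qy) = 0" using eps_nonneg[of "zroot pl Kx Ky Kz qx qy"] by linarith
  then obtain t where t: "zroot pl Kx Ky Kz qx qy = complex_of_real t" "-1 \<le> t" "t \<le> 1"
    using eps_zero by blast
  have "complex_of_real (t^2 + coefA Kx Ky Kz qy * t + coefB Kx Ky Kz qx qy) = 0"
    using zroot_root[of pl Kx Ky Kz qx qy] unfolding t(1) by simp
  then have f0: "t^2 + coefA Kx Ky Kz qy * t + coefB Kx Ky Kz qx qy = 0" by (simp only: of_real_eq_0_iff)
  have "(XX Kx Ky qy - cosh (2*Kz))^2 > 0" using assms(3) by simp
  with lower[OF assms(1,2) t(2,3), of qy Kz qx] f0 show False by linarith
qed

lemma tri_char:
  fixes Kx Ky Kz :: real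
  assumes "Kx > 0" "Ky > 0" "Kz > 0"
  shows "(\<bar>Kx - Ky\<bar> \<le> Kz \<and> Kz \<le> Kx + Ky) \<longleftrightarrow>
     (cosh (2*Kx - 2*Ky) \<le> cosh (2*Kz) \<and> cosh (2*Kz) \<le> cosh (2*Kx + 2*Ky))"
proof -
  have a: "cosh (2*Kx - 2*Ky) = cosh \<bar>2*Kx - 2*Ky\<bar>" by (simp only: cosh_real_abs)
  have "cosh \<bar>2*Kx - 2*Ky\<bar> \<le> cosh (2*Kz) \<longleftrightarrow> \<bar>2*Kx - 2*Ky\<bar> \<le> 2*Kz"
    using assms by (intro cosh_real_nonneg_le_iff) auto
  moreover have "cosh (2*Kz) \<le> cosh (2*Kx + 2*Ky) \<longleftrightarrow> 2*Kz \<le> 2*Kx + 2*Ky"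
    using assms by (intro cosh_real_nonneg_le_iff) auto
  ultimately show ?thesis unfolding a by auto
qed


lemma eps1_nonneg: "eps1 Kx Ky Kz qx qy \<ge> 0"
  unfolding eps1_def using eps_nonneg by simp

lemma eps1_zero_at:
  assumes "XX Kx Ky qy = cosh (2*Kz)"
  shows "eps1 Kx Ky Kz 0 qy = 0"
proof -
  have hk: "sinh (2*Kz)^2 = cosh (2*Kz)^2 - 1" by (rule sinh_square_eq)
  have "1^2 + coefA Kx Ky Kz qy * 1 + coefB Kx Ky Kz 0 qy = 0"
    unfolding key assms hk by (simp add: algebra_simps power2_eq_square)
  then have "(1 - zroot True Kx Ky Kz 0 qy) * (1 - zroot False Kx Ky Kz 0 qy) = 0"
    unfolding zroot_prod by simp
  then have "zroot True Kx Ky Kz 0 qy = 1 \<or> zroot False Kx Ky Kz 0 qy = 1" by auto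
  then show ?thesis unfolding eps1_def using eps_one eps_nonneg
    by (metis min.absorb1 min.absorb2)
qed

theorem mainTheorem6:
  fixes Kx Ky Kz :: real
  assumes "Kx > 0" and "Ky > 0" and "Kz > 0"
  shows "((\<exists>q\<in>{-pi..pi} \<times> {-pi..pi}.
              eps1 Kx Ky Kz (fst q) (snd q) = 0 \<and>
              (\<forall>q'\<in>{-pi..pi} \<times> {-pi..pi}.
                 eps1 Kx Ky Kz (fst q) (snd q) \<le> eps1 Kx Ky Kz (fst q') (snd q')))
          \<longleftrightarrow> (\<bar>Kx - Ky\<bar> \<le> Kz \<and> Kz \<le> Kx + Ky))
       \<and> ((\<bar>Kx - Ky\<bar> \<le> Kz \<and> Kz \<le> Kx + Ky) \<longrightarrow>
            (\<exists>qs::real. cos qs = (cosh (2*Kz) - cosh (2*Kx) * cosh (2*Ky)) / (sinh (2*Kx) * sinh (2*Ky)))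
          \<and> (\<forall>qs::real. cos qs = (cosh (2*Kz) - cosh (2*Kx) * cosh (2*Ky)) / (sinh (2*Kx) * sinh (2*Ky))
                \<longrightarrow> eps1 Kx Ky Kz 0 qs = 0 \<and> eps1 Kx Ky Kz 0 (- qs) = 0))
       \<and> (\<not> (\<bar>Kx - Ky\<bar> \<le> Kz \<and> Kz \<le> Kx + Ky) \<longrightarrow>
            (\<forall>qx qy. eps1 Kx Ky Kz qx qy > 0))"
proof -
  define T where "T = (\<bar>Kx - Ky\<bar> \<le> Kz \<and> Kz \<le> Kx + Ky)"
  define v0 where "v0 = (cosh (2*Kz) - cosh (2*Kx) * cosh (2*Ky)) / (sinh (2*Kx) * sinh (2*Ky))"
  have hpos: "sinh (2*Kx) * sinh (2*Ky) > 0" using assms by simp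
  have P3: "\<not> T \<longrightarrow> (\<forall>qx qy. eps1 Kx Ky Kz qx qy > 0)"
  proof (intro impI allI)
    fix qx qy
    assume "\<not> T"
    then have "\<not> (cosh (2*Kx - 2*Ky) \<le> cosh (2*Kz) \<and> cosh (2*Kz) \<le> cosh (2*Kx + 2*Ky))"
      using tri_char[OF assms] unfolding T_def by blast
    then have "XX Kx Ky qy \<noteq> cosh (2*Kz)" using XX_ge[OF assms(1,2), of qy] by auto
    then show "eps1 Kx Ky Kz qx qy > 0" unfolding eps1_def
      using no_zero_root[OF assms(1,2)] by simp
  qed
  have XXv: "XX Kx Ky qs = cosh (2*Kz)" if "cos qs = v0" for qs
  proof -
    have "sinh (2*Kx) * sinh (2*Ky) * v0 = cosh (2*Kz) - cosh (2*Kx) * cosh (2*Ky)"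
    proof -
      have g: "h * (a / h) = a" if "h \<noteq> 0" for h a :: real using that by simp
      show ?thesis unfolding v0_def by (rule g) (use hpos in linarith)
    qed
    then show ?thesis using that unfolding XX_def by (simp only:)
  qed
  have P2: "T \<longrightarrow> (\<exists>qs. cos qs = v0) \<and> (\<forall>qs. cos qs = v0 \<longrightarrow> eps1 Kx Ky Kz 0 qs = 0 \<and> eps1 Kx Ky Kz 0 (- qs) = 0)"
  proof (intro impI conjI)
    assume "T"
    then have c: "cosh (2*Kx - 2*Ky) \<le> cosh (2*Kz)" "cosh (2*Kz) \<le> cosh (2*Kx + 2*Ky)"
      using tri_char[OF assms] unfolding T_def by blast+
    have "-1 \<le> v0" using c(1) hpos unfolding v0_def cosh_diff by (simp add: field_simps)
    moreover have "v0 \<le> 1" using c(2) hpos unfolding v0_def cosh_add by (simp add: field_simps)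
    ultimately show "\<exists>qs. cos qs = v0" using cos_arccos by blast
  next
    show "\<forall>qs. cos qs = v0 \<longrightarrow> eps1 Kx Ky Kz 0 qs = 0 \<and> eps1 Kx Ky Kz 0 (- qs) = 0"
    proof (intro allI impI)
      fix qs assume "cos qs = v0"
      then show "eps1 Kx Ky Kz 0 qs = 0 \<and> eps1 Kx Ky Kz 0 (- qs) = 0"
        using XXv[of qs] XXv[of "-qs"] eps1_zero_at by simp
    qed
  qed
  have P1: "(\<exists>q\<in>{-pi..pi} \<times> {-pi..pi}.
              eps1 Kx Ky Kz (fst q) (snd q) = 0 \<and>
              (\<forall>q'\<in>{-pi..pi} \<times> {-pi..pi}.
                 eps1 Kx Ky Kz (fst q) (snd q) \<le> eps1 Kx Ky Kz (fst q') (snd q'))) \<longleftrightarrow> T"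
  proof
    assume "\<exists>q\<in>{-pi..pi} \<times> {-pi..pi}. eps1 Kx Ky Kz (fst q) (snd q) = 0 \<and>
              (\<forall>q'\<in>{-pi..pi} \<times> {-pi..pi}.
                 eps1 Kx Ky Kz (fst q) (snd q) \<le> eps1 Kx Ky Kz (fst q') (snd q'))"
    then obtain q where "eps1 Kx Ky Kz (fst q) (snd q) = 0" by blast
    then show T using P3 by (metis less_irrefl)
  next
    assume "T"
    then obtain qs where qs: "cos qs = v0" using P2 by blast
    define q' where "q' = arccos (cos qs)"
    have "cos q' = v0" unfolding q'_def using qs cos_ge_minus_one[of qs] cos_le_one[of qs] cos_arccos[of "cos qs"] by simp
    then have e0: "eps1 Kx Ky Kz 0 q' = 0" using P2 \<open>T\<close> by blast
    have "0 \<le> q'" "q' \<le> pi" unfolding q'_def by (simp_all add: arccos_lbound arccos_ubound)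
    then have "(0, q') \<in> {-pi..pi} \<times> {-pi..pi}" by auto
    then show "\<exists>q\<in>{-pi..pi} \<times> {-pi..pi}. eps1 Kx Ky Kz (fst q) (snd q) = 0 \<and>
              (\<forall>q'\<in>{-pi..pi} \<times> {-pi..pi}.
                 eps1 Kx Ky Kz (fst q) (snd q) \<le> eps1 Kx Ky Kz (fst q') (snd q'))"
      using e0 eps1_nonneg by (intro bexI[of _ "(0, q')"]) auto
  qed
  show ?thesis using P1 P2 P3 unfolding T_def v0_def by blast
qed

end
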